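(* Let $n\ge1$ and let $\mathbf{k}:\mathbb{R}^{2n}\to\mathbb{R}$ be a continuous function such that there is a continuous $\tilde{\mathbf{k}}:\mathbb{R}^n\to\mathbb{R}$ with $\mathbf{k}(x,y)=\tilde{\mathbf{k}}(x-y)$ for all $x,y\in\mathbb{R}^n$. Let $\Omega_S$ be the set of all real $2\times 2n$ matrices of the form $A=\begin{bmatrix} w & 0\\ 0 & -w\end{bmatrix}$, $w\in\mathbb{R}^n$, and \[ \mathcal{M}(\Omega_S)=\operatorname{span}\{\,z\mapsto g(Az):\ A\in\Omega_S,\ g\in C(\mathbb{R}^2,\mathbb{R})\,\},\qquad z\in\mathbb{R}^{2n}. \] Then $\mathbf{k}$ belongs to the closure of $\mathcal{M}(\Omega_S)$ in $C(\mathbb{R}^{2n},\mathbb{R})$ with the topology of uniform convergence on compact sets. In addition, if $\mathbf{k}$ is symmetric, i.e. $\mathbf{k}(x,y)=\mathbf{k}(y,x)$ for all $x,y$, then for every compact set $K\subset\mathbb{R}^{2n}$ and every $\epsilon>0$ there exist positive integers $M_1,M_2$, coefficients $c_j\in\mathbb{R}$, vectors $w_j\in\mathbb{R}^n$ ($j=1,\dots,M_1$) and numbers $t_k\in\mathbb{R}$ ($k=1,\dots,M_2$) such that for all $(x,y)\in K$ \[ \Big|\mathbf{k}(x,y)-\sum_{j=1}^{M_1}\sum_{k=1}^{M_2}\frac{c_j}{M_2}\cos(\langle w_j,x\rangle+t_k)\cos(\langle w_j,y\rangle+t_k)\Big|<\epsilon. \]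
   Context: $\langle\cdot,\cdot\rangle$ is the standard inner product on $\mathbb{R}^n$. *)

theory Defs
  imports "HOL-Analysis.Analysis"
begin

text \<open>R^{2n} is modelled as pairs (x,y) of vectors in real^'n (product topology).
  A matrix A = [w 0; 0 -w] in Omega_S acts by A (x,y) = (w\<bullet>x, -(w\<bullet>y)).\<close>

definition Omega_S_apply :: "real^'n \<Rightarrow> (real^'n) \<times> (real^'n) \<Rightarrow> real \<times> real" where
  "Omega_S_apply w z = (w \<bullet> fst z, - (w \<bullet> snd z))"

definition M_Omega_S :: "((real^'n) \<times> (real^'n) \<Rightarrow> real) set" where
  "M_Omega_S = {f. \<exists>m (c::nat \<Rightarrow> real) (w::nat \<Rightarrow> real^'n) (g::nat \<Rightarrow> real \<times> real \<Rightarrow> real).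
       (\<forall>i<m. continuous_on UNIV (g i)) \<and>
       f = (\<lambda>z. \<Sum>i<m. c i * g i (Omega_S_apply (w i) z))}"

definition in_compact_uniform_closure :: "('a::topological_space \<Rightarrow> real) set \<Rightarrow> ('a \<Rightarrow> real) \<Rightarrow> bool" where
  "in_compact_uniform_closure S k \<longleftrightarrow>
     (\<forall>K e. compact K \<and> e > 0 \<longrightarrow> (\<exists>f\<in>S. \<forall>z\<in>K. \<bar>k z - f z\<bar> < e))"

end

theory Submission
  imports Defs
begin

inductive_set TR :: "(real^'n \<Rightarrow> real) set" where
  zero: "(\<lambda>u. 0) \<in> TR"
| cosi: "(\<lambda>u. cos (w \<bullet> u + s)) \<in> TR"
| add: "f \<in> TR \<Longrightarrow> g \<in> TR \<Longrightarrow> (\<lambda>u. f u + g u) \<in> TR"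
| scale: "f \<in> TR \<Longrightarrow> (\<lambda>u. c * f u) \<in> TR"

lemma TR_cos_mult: "g \<in> TR \<Longrightarrow> (\<lambda>u. cos (w \<bullet> u + s) * g u) \<in> TR"
proof (induction rule: TR.induct)
  case zero
  then show ?case using TR.zero by simp
next
  case (cosi w' s')
  have eq: "(\<lambda>u. cos (w \<bullet> u + s) * cos (w' \<bullet> u + s')) =
     (\<lambda>u. (1/2) * cos ((w + w') \<bullet> u + (s + s')) + (1/2) * cos ((w - w') \<bullet> u + (s - s')))"
  proof
    fix u
    have cc: "cos A * cos B = 1/2 * cos (A + B) + 1/2 * cos (A - B)" for A B :: real
    proof -
      have "cos (A+B) + cos (A-B) = 2*cos A*cos B" by (simp add: cos_add cos_diff)
      then show ?thesis by linarith
    qed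
    have a: "(w + w') \<bullet> u + (s + s') = (w \<bullet> u + s) + (w' \<bullet> u + s')"
      by (simp add: inner_add_left)
    have b: "(w - w') \<bullet> u + (s - s') = (w \<bullet> u + s) - (w' \<bullet> u + s')"
      by (simp add: inner_diff_left)
    show "cos (w \<bullet> u + s) * cos (w' \<bullet> u + s') =
     (1/2) * cos ((w + w') \<bullet> u + (s + s')) + (1/2) * cos ((w - w') \<bullet> u + (s - s'))"
      unfolding a b using cc by simp
  qed
  show ?case unfolding eq by (intro TR.add TR.scale TR.cosi)
next
  case (add f g)
  have "(\<lambda>u. cos (w \<bullet> u + s) * (f u + g u)) =
     (\<lambda>u. cos (w \<bullet> u + s) * f u + cos (w \<bullet> u + s) * g u)"
    by (simp add: distrib_left)
  then show ?case using add.IH by (simp only:) (rule TR.add)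
next
  case (scale f c)
  have "(\<lambda>u. cos (w \<bullet> u + s) * (c * f u)) = (\<lambda>u. c * (cos (w \<bullet> u + s) * f u))"
    by (simp add: algebra_simps)
  then show ?case using scale.IH by (simp only:) (rule TR.scale)
qed

lemma TR_mult: "f \<in> TR \<Longrightarrow> g \<in> TR \<Longrightarrow> (\<lambda>u. f u * g u) \<in> TR"
proof (induction rule: TR.induct)
  case zero
  then show ?case using TR.zero by simp
next
  case (cosi w s)
  then show ?case by (rule TR_cos_mult)
next
  case (add f1 f2)
  have "(\<lambda>u. (f1 u + f2 u) * g u) = (\<lambda>u. f1 u * g u + f2 u * g u)"
    by (simp add: distrib_right)
  then show ?case using add.IH[OF add.prems] by (simp only:) (rule TR.add)
next
  case (scale f c)
  have "(\<lambda>u. (c * f u) * g u) = (\<lambda>u. c * (f u * g u))"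
    by (simp add: algebra_simps)
  then show ?case using scale.IH[OF scale.prems] by (simp only:) (rule TR.scale)
qed

lemma TR_const: "(\<lambda>u. c) \<in> TR"
proof -
  have "(\<lambda>u::real^'a. c * cos (0 \<bullet> u + 0)) \<in> TR" by (intro TR.scale TR.cosi)
  then show ?thesis by simp
qed

lemma TR_cont: "f \<in> TR \<Longrightarrow> continuous_on S f"
  by (induction rule: TR.induct) (auto intro!: continuous_intros)

lemma TR_sep:
  fixes x y :: "real^'n"
  assumes "x \<noteq> y"
  shows "\<exists>f\<in>TR. f x \<noteq> f y"
proof -
  define d where "d = x - y"
  define r where "r = d \<bullet> d"
  have "d \<noteq> 0" using assms d_def by simp
  then have r: "r > 0" unfolding r_def by simp
  define t where "t = pi / (2 * r)"
  define w where "w = t *\<^sub>R d"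
  define s where "s = pi/2 - w \<bullet> y"
  have "w \<bullet> x - w \<bullet> y = t * r"
    unfolding w_def r_def d_def by (simp add: inner_diff_right inner_diff_left algebra_simps)
  also have "\<dots> = pi/2" using r unfolding t_def by simp
  finally have wx: "w \<bullet> x + s = pi" unfolding s_def by simp
  have wy: "w \<bullet> y + s = pi/2" unfolding s_def by simp
  show ?thesis
    by (rule bexI[OF _ TR.cosi[of w s]]) (simp add: wx wy)
qed

lemma TR_list: "f \<in> TR \<Longrightarrow> \<exists>L. \<forall>u. f u = sum_list (map (\<lambda>(a,w,s). a * cos (w \<bullet> u + s)) L)"
proof (induction rule: TR.induct)
  case zero
  show ?case by (rule exI[of _ "[]"]) simp
next
  case (cosi w s)
  show ?case by (rule exI[of _ "[(1,w,s)]"]) simp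
next
  case (add f g)
  then obtain L1 L2 where "\<forall>u. f u = sum_list (map (\<lambda>(a,w,s). a * cos (w \<bullet> u + s)) L1)"
    "\<forall>u. g u = sum_list (map (\<lambda>(a,w,s). a * cos (w \<bullet> u + s)) L2)" by blast
  then show ?case by (intro exI[of _ "L1 @ L2"]) simp
next
  case (scale f c)
  then obtain L where L: "\<forall>u. f u = sum_list (map (\<lambda>(a,w,s). a * cos (w \<bullet> u + s)) L)" by blast
  show ?case
  proof (intro exI[of _ "map (\<lambda>(a,w,s). (c*a,w,s)) L"] allI)
    fix u
    show "c * f u = sum_list (map (\<lambda>(a,w,s). a * cos (w \<bullet> u + s)) (map (\<lambda>(a,w,s). (c*a,w,s)) L))"
      unfolding L[rule_format] by (induction L) (auto simp: algebra_simps)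
  qed
qed

lemma approx:
  fixes kt :: "real^'n \<Rightarrow> real"
  assumes "continuous_on UNIV kt" "compact D" "e > 0"
  obtains m :: nat and a w s where "\<forall>u\<in>D. \<bar>kt u - (\<Sum>i<m. a i * cos (w i \<bullet> u + s i))\<bar> < e"
proof -
  interpret function_ring_on TR D
  proof
    show "compact D" by (rule assms(2))
  next
    show "continuous_on D f" if "f \<in> TR" for f using that by (rule TR_cont)
  next
    show "(\<lambda>x. f x + g x) \<in> TR" if "f \<in> TR" "g \<in> TR" for f g using that by (rule TR.add)
  next
    show "(\<lambda>x. f x * g x) \<in> TR" if "f \<in> TR" "g \<in> TR" for f g using that by (rule TR_mult)
  next
    show "(\<lambda>_. c) \<in> TR" for c by (rule TR_const)
  next
    show "\<exists>f\<in>TR. f x \<noteq> f y" if "x \<noteq> y" for x y using that by (rule TR_sep)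
  qed
  have cD: "continuous_on D kt" using assms(1) continuous_on_subset by blast
  have SW: "\<exists>g\<in>TR. \<forall>x\<in>D. \<bar>kt x - g x\<bar> < e"
    by (rule Stone_Weierstrass_basic[OF cD assms(3)])
  obtain g where g: "g \<in> TR" "\<forall>u\<in>D. \<bar>kt u - g u\<bar> < e"
    using SW by (elim bexE) 
  obtain L where L: "\<forall>u. g u = sum_list (map (\<lambda>(a,w,s). a * cos (w \<bullet> u + s)) L)"
    using TR_list[OF g(1)] by blast
  define a where "a = (\<lambda>i. fst (L!i))"
  define w where "w = (\<lambda>i. fst (snd (L!i)))"
  define s where "s = (\<lambda>i. snd (snd (L!i)))"
  have "\<forall>u. g u = (\<Sum>i<length L. a i * cos (w i \<bullet> u + s i))"
    using L by (simp add: a_def w_def s_def sum_list_sum_nth atLeast0LessThan case_prod_beta)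
  then have X: "\<forall>u\<in>D. \<bar>kt u - (\<Sum>i<length L. a i * cos (w i \<bullet> u + s i))\<bar> < e"
    using g(2) by simp
  show ?thesis by (rule that[OF X])
qed

lemma sum_shift1: "(\<Sum>j=1..Suc m. G j) = (\<Sum>i<m. G (Suc i)) + (G (Suc m) :: real)"
proof (induction m)
  case 0
  then show ?case by simp
next
  case (Suc m)
  have "(\<Sum>j=1..Suc (Suc m). G j) = (\<Sum>j=1..Suc m. G j) + G (Suc (Suc m))"
    by simp
  then show ?case using Suc by simp
qed

theorem theorem5p1:
  fixes k :: "(real^'n) \<times> (real^'n) \<Rightarrow> real"
  assumes k_cont: "continuous_on UNIV k"
    and k_shift: "\<exists>kt :: real^'n \<Rightarrow> real. continuous_on UNIV kt \<and>
                    (\<forall>x y. k (x, y) = kt (x - y))"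
  shows "in_compact_uniform_closure M_Omega_S k \<and>
    ((\<forall>x y. k (x, y) = k (y, x)) \<longrightarrow>
      (\<forall>K e. compact K \<and> e > 0 \<longrightarrow>
        (\<exists>(M1::nat) (M2::nat) (c::nat \<Rightarrow> real) (w::nat \<Rightarrow> real^'n) (t::nat \<Rightarrow> real).
           M1 > 0 \<and> M2 > 0 \<and>
           (\<forall>(x, y)\<in>K. \<bar>k (x, y) - (\<Sum>j=1..M1. \<Sum>l=1..M2.
               c j / real M2 * cos (w j \<bullet> x + t l) * cos (w j \<bullet> y + t l))\<bar> < e))))"
proof -
  obtain kt :: "real^'n \<Rightarrow> real" where kt: "continuous_on UNIV kt" "\<And>x y. k (x, y) = kt (x - y)"
    using k_shift by blast
  have cD: "compact ((\<lambda>z. fst z - snd z) ` K)" if "compact K" for K :: "((real^'n) \<times> (real^'n)) set"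
    by (rule compact_continuous_image[OF _ that]) (intro continuous_intros)
  have P1: "in_compact_uniform_closure M_Omega_S k"
    unfolding in_compact_uniform_closure_def
  proof (intro allI impI)
    fix K :: "((real^'n) \<times> (real^'n)) set" and e :: real
    assume Ke: "compact K \<and> e > 0"
    obtain m :: nat and a w s where A: "\<forall>u\<in>(\<lambda>z. fst z - snd z) ` K.
        \<bar>kt u - (\<Sum>i<m. a i * cos (w i \<bullet> u + s i))\<bar> < e"
      apply (rule approx[OF kt(1) cD[OF conjunct1[OF Ke]] conjunct2[OF Ke]])
      apply (erule that)
      done
    define g where "g = (\<lambda>i (z::real \<times> real). cos (fst z + snd z + s i))"
    define f where "f = (\<lambda>z. \<Sum>i<m. a i * g i (Omega_S_apply (w i) z))"
    have fM: "f \<in> M_Omega_S"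
      unfolding M_Omega_S_def f_def mem_Collect_eq
      apply (rule exI[of _ m], rule exI[of _ a], rule exI[of _ w], rule exI[of _ g])
      unfolding g_def by (auto intro!: continuous_intros)
    have "\<forall>z\<in>K. \<bar>k z - f z\<bar> < e"
    proof
      fix z assume z: "z \<in> K"
      obtain x y where xy: "z = (x, y)" by (cases z)
      have "f z = (\<Sum>i<m. a i * cos (w i \<bullet> (x - y) + s i))"
        unfolding f_def g_def Omega_S_apply_def xy by (simp add: inner_diff_right)
      moreover have "k z = kt (x - y)" using kt(2) xy by simp
      ultimately show "\<bar>k z - f z\<bar> < e" using A z xy by force
    qed
    then show "\<exists>f\<in>M_Omega_S. \<forall>z\<in>K. \<bar>k z - f z\<bar> < e" using fM by blast
  qed
  have P2: "\<exists>(M1::nat) (M2::nat) (c::nat \<Rightarrow> real) (w::nat \<Rightarrow> real^'n) (t::nat \<Rightarrow> real).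
           M1 > 0 \<and> M2 > 0 \<and>
           (\<forall>(x, y)\<in>K. \<bar>k (x, y) - (\<Sum>j=1..M1. \<Sum>l=1..M2.
               c j / real M2 * cos (w j \<bullet> x + t l) * cos (w j \<bullet> y + t l))\<bar> < e)"
    if sym: "\<forall>x y. k (x, y) = k (y, x)" and Ke: "compact K" "e > 0" for K e
  proof -
    have ktsym: "kt (- u) = kt u" for u
      using sym kt(2)[of u 0] kt(2)[of 0 u] by simp
    let ?D = "(\<lambda>z. fst z - snd z) ` K"
    have c1: "compact ?D" by (rule cD[OF Ke(1)])
    have c2: "compact (uminus ` ?D)"
      by (rule compact_continuous_image[OF _ c1]) (intro continuous_intros)
    have cpt: "compact (?D \<union> uminus ` ?D)" by (rule compact_Un[OF c1 c2])
    obtain m :: nat and a w s where A: "\<forall>u\<in>?D \<union> uminus ` ?D.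
        \<bar>kt u - (\<Sum>i<m. a i * cos (w i \<bullet> u + s i))\<bar> < e"
      apply (rule approx[OF kt(1) cpt Ke(2)])
      apply (erule that)
      done
    define c where "c = (\<lambda>j. if j \<ge> 1 \<and> j - 1 < m then 2 * a (j - 1) * cos (s (j - 1)) else 0)"
    define W where "W = (\<lambda>j. w (j - 1))"
    define t where "t = (\<lambda>l::nat. if l = 1 then 0 else pi/2)"
    have main: "\<bar>k (x, y) - (\<Sum>j=1..Suc m. \<Sum>l=1..2.
               c j / real 2 * cos (W j \<bullet> x + t l) * cos (W j \<bullet> y + t l))\<bar> < e"
      if z: "(x, y) \<in> K" for x y
    proof -

      have xy: "(x,y) = (x,y)" by simp
      define u where "u = x - y"
      have u1: "u \<in> ?D \<union> uminus ` ?D" using z u_def by force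
      have u2: "- u \<in> ?D \<union> uminus ` ?D" using z u_def by force
      have e1: "\<bar>kt u - (\<Sum>i<m. a i * cos (w i \<bullet> u + s i))\<bar> < e" using A u1 by blast
      have e2': "\<bar>kt (- u) - (\<Sum>i<m. a i * cos (w i \<bullet> (- u) + s i))\<bar> < e"
        using A u2 by blast
      have e2: "\<bar>kt u - (\<Sum>i<m. a i * cos (- (w i \<bullet> u) + s i))\<bar> < e"
        using e2' ktsym[of u] by simp
      have inner: "(\<Sum>l=1..2. c (Suc i) / real 2 * cos (W (Suc i) \<bullet> x + t l) * cos (W (Suc i) \<bullet> y + t l))
          = (a i * cos (w i \<bullet> u + s i) + a i * cos (- (w i \<bullet> u) + s i)) / 2" if "i < m" for i
      proof -
        have "{1..2::nat} = {1,2}" by auto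
        then have "(\<Sum>l=1..2. c (Suc i) / real 2 * cos (W (Suc i) \<bullet> x + t l) * cos (W (Suc i) \<bullet> y + t l))
          = a i * cos (s i) * (cos (w i \<bullet> x) * cos (w i \<bullet> y) + sin (w i \<bullet> x) * sin (w i \<bullet> y))"
          using that by (simp add: c_def W_def t_def cos_add algebra_simps)
        also have "\<dots> = a i * cos (s i) * cos (w i \<bullet> u)"
          unfolding u_def inner_diff_right cos_diff by simp
        also have "\<dots> = (a i * cos (w i \<bullet> u + s i) + a i * cos (- (w i \<bullet> u) + s i)) / 2"
          by (simp add: cos_add cos_diff algebra_simps)
        finally show ?thesis .
      qed
      have "(\<Sum>j=1..Suc m. \<Sum>l=1..2. c j / real 2 * cos (W j \<bullet> x + t l) * cos (W j \<bullet> y + t l))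
         = (\<Sum>i<m. (a i * cos (w i \<bullet> u + s i) + a i * cos (- (w i \<bullet> u) + s i)) / 2)"
      proof -
        have "(\<Sum>j=1..Suc m. \<Sum>l=1..2. c j / real 2 * cos (W j \<bullet> x + t l) * cos (W j \<bullet> y + t l))
          = (\<Sum>i<m. \<Sum>l=1..2. c (Suc i) / real 2 * cos (W (Suc i) \<bullet> x + t l) * cos (W (Suc i) \<bullet> y + t l))
            + (\<Sum>l=1..2. c (Suc m) / real 2 * cos (W (Suc m) \<bullet> x + t l) * cos (W (Suc m) \<bullet> y + t l))"
          by (rule sum_shift1)
        also have "(\<Sum>l=1..2. c (Suc m) / real 2 * cos (W (Suc m) \<bullet> x + t l) * cos (W (Suc m) \<bullet> y + t l)) = 0"
          by (simp add: c_def)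
        also have "(\<Sum>i<m. \<Sum>l=1..2. c (Suc i) / real 2 * cos (W (Suc i) \<bullet> x + t l) * cos (W (Suc i) \<bullet> y + t l))
          = (\<Sum>i<m. (a i * cos (w i \<bullet> u + s i) + a i * cos (- (w i \<bullet> u) + s i)) / 2)"
          by (rule sum.cong[OF refl], rule inner) simp
        finally show ?thesis by simp
      qed
      also have "\<dots> = ((\<Sum>i<m. a i * cos (w i \<bullet> u + s i)) + (\<Sum>i<m. a i * cos (- (w i \<bullet> u) + s i))) / 2"
        by (simp only: sum.distrib[symmetric] sum_divide_distrib)
      finally have S: "(\<Sum>j=1..Suc m. \<Sum>l=1..2. c j / real 2 * cos (W j \<bullet> x + t l) * cos (W j \<bullet> y + t l))
         = ((\<Sum>i<m. a i * cos (w i \<bullet> u + s i)) + (\<Sum>i<m. a i * cos (- (w i \<bullet> u) + s i))) / 2" .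
      have "k (x, y) = kt u" using kt(2) u_def by simp
      then show ?thesis
        using e1 e2 S by (simp add: abs_less_iff)
    qed
    show ?thesis
      apply (rule exI[of _ "Suc m"], rule exI[of _ 2], rule exI[of _ c], rule exI[of _ W], rule exI[of _ t])
      apply (intro conjI)
        apply simp
       apply simp
      apply (intro ballI)
      apply clarify
      apply (rule main)
      apply assumption
      done
  qed
  show ?thesis using P1 P2 by blast
qed

end
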